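(* Let $d\ge2$ be an integer, $D_1,\dots,D_d$ real constants, $D=\sum_iD_i$, and let $m:[-D^2/d,\pi^2/d)\to[0,\infty)$ be defined by (with $\mu=-\lambda$ for $\lambda<0$) $$m(\lambda)=\begin{cases}0 & \text{if } \lambda=-D^2/d<0,\\[2pt] \left|\ln\left(\dfrac{\big(\frac{e^{\sqrt{d\mu}}}{\sqrt{-C_-}}+1\big)\big(-\frac{1}{\sqrt{-C_-}}+1\big)}{\big(1-\frac{e^{\sqrt{d\mu}}}{\sqrt{-C_-}}\big)\big(1+\frac{1}{\sqrt{-C_-}}\big)}\right)\right| & \text{if } -D^2/d<\lambda<0,\\[2pt] |D| & \text{if } \lambda=0,\\[2pt] \left|\ln\dfrac{\tan(C_++\sqrt{d\lambda})+\sec(C_++\sqrt{d\lambda})}{\tan(C_+)+\sec(C_+)}\right| & \text{if } 0<\lambda<\pi^2/d,\end{cases}$$ where $C_-=\dfrac{e^{2\sqrt{d\mu}}-e^{D+\sqrt{d\mu}}}{e^{D+\sqrt{d\mu}}-1}$ and $C_+=\arctan\left(\dfrac{\cos(\sqrt{d\lambda})-e^D}{\sin(\sqrt{d\lambda})}\right)$. Then $m$ is monotone increasing.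
   Context: For $-D^2/d<\lambda<0$ one has $C_-<0$, so $\sqrt{-C_-}$ is defined. *)

theory Defs
  imports Complex_Main
begin

definition Cminus :: "nat \<Rightarrow> real \<Rightarrow> real \<Rightarrow> real" where
  "Cminus d D mu =
     (exp (2 * sqrt (real d * mu)) - exp (D + sqrt (real d * mu))) /
     (exp (D + sqrt (real d * mu)) - 1)"

definition Cplus :: "nat \<Rightarrow> real \<Rightarrow> real \<Rightarrow> real" where
  "Cplus d D lam =
     arctan ((cos (sqrt (real d * lam)) - exp D) / sin (sqrt (real d * lam)))"

definition sec :: "real \<Rightarrow> real" where
  "sec x = 1 / cos x"

text \<open>The function m on [-D^2/d, pi^2/d); values outside this interval are irrelevant.\<close>
definition mfun :: "nat \<Rightarrow> real \<Rightarrow> real \<Rightarrow> real" where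
  "mfun d D lam =
    (if lam < 0 \<and> lam = - D\<^sup>2 / real d then 0
     else if - D\<^sup>2 / real d < lam \<and> lam < 0 then
       (let mu = - lam; c = sqrt (- Cminus d D mu); s = sqrt (real d * mu) in
        \<bar>ln (((exp s / c + 1) * (- (1 / c) + 1)) /
             ((1 - exp s / c) * (1 + 1 / c)))\<bar>)
     else if lam = 0 then \<bar>D\<bar>
     else
       (let s = sqrt (real d * lam); cp = Cplus d D lam in
        \<bar>ln ((tan (cp + s) + sec (cp + s)) / (tan cp + sec cp))\<bar>))"

end

theory Submission
  imports Defs
begin

lemma tanh_abs_ln:
  fixes v :: real assumes "v > 0"
  shows "(tanh (\<bar>ln v\<bar> / 2))\<^sup>2 = ((v - 1) / (v + 1))\<^sup>2"
proof -
  have "\<bar>ln v\<bar> / 2 = \<bar>ln v / 2\<bar>" by simp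
  hence "(tanh (\<bar>ln v\<bar> / 2))\<^sup>2 = (tanh (ln v / 2))\<^sup>2"
    by (simp only: tanh_real_abs power2_abs)
  also have "ln v / 2 = ln (sqrt v)" using assms by (simp add: ln_sqrt)
  also have "tanh (ln (sqrt v)) = ((sqrt v)^2 - 1) / ((sqrt v)^2 + 1)"
    using assms by (intro tanh_ln_real) simp
  also have "(sqrt v)^2 = v" using assms by simp
  finally show ?thesis .
qed

lemma cosh_exp: "cosh (D::real) = (exp D + 1 / exp D) / 2"
  by (simp add: cosh_field_def exp_minus inverse_eq_divide)

lemma ratio_lemma:
  fixes P Q :: real
  assumes "Q \<noteq> 0" "P + Q \<noteq> 0"
  shows "(P / Q - 1) / (P / Q + 1) = (P - Q) / (P + Q)"
proof -
  have "P / Q - 1 = (P - Q) / Q" "P / Q + 1 = (P + Q) / Q" using assms by (auto simp: field_simps)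
  thus ?thesis using assms by simp
qed

lemma cancel_lemma:
  fixes X Y Z W c :: real
  assumes "c \<noteq> 0"
  shows "(X / c * (Y / c)) / (Z / c * (W / c)) = X * Y / (Z * W)"
  using assms by (cases "Z * W = 0") (auto simp: field_simps)

lemma gen_lemma:
  fixes N X M E :: real
  assumes "E \<noteq> 0"
  shows "N / E * X / ((- M) / E)\<^sup>2 = N * X * E / M\<^sup>2"
proof (cases "M = 0")
  case True thus ?thesis by simp
next
  case False thus ?thesis using assms by (simp add: power_divide field_simps power2_eq_square)
qed

lemma gen2:
  fixes X Y a b :: real
  assumes "a \<noteq> 0" "b \<noteq> 0"
  shows "X / (2 * a * b) / (Y / (2 * b)) = X / (a * Y)"
proof (cases "Y = 0")
  case True thus ?thesis by simp
next
  case False thus ?thesis using assms by (simp add: field_simps)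
qed

lemma pos_case:
  fixes s D :: real
  assumes s0: "0 < s" and spi: "s < pi"
  defines "b \<equiv> exp D"
  defines "cp \<equiv> arctan ((cos s - b) / sin s)"
  defines "v \<equiv> (tan (cp + s) + sec (cp + s)) / (tan cp + sec cp)"
  shows "v > 0 \<and> ((v - 1) / (v + 1))\<^sup>2 = (cosh D - cos s) / (cosh D + 1)"
proof -
  have b0: "b > 0" unfolding b_def by simp
  have ss: "sin s > 0" using s0 spi by (intro sin_gt_zero) auto
  have cs1: "cos s < 1" using s0 spi cos_monotone_0_pi[of 0 s] by simp
  have sc: "(sin s)\<^sup>2 + (cos s)\<^sup>2 = 1" by simp
  define R where "R = sqrt (1 - 2 * b * cos s + b\<^sup>2)"
  have Rq: "1 - 2 * b * cos s + b\<^sup>2 = (cos s - b)\<^sup>2 + (sin s)\<^sup>2"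
    using sc by (simp add: power2_eq_square algebra_simps)
  have Rpos0: "1 - 2 * b * cos s + b\<^sup>2 > 0" using Rq ss by (simp add: add_nonneg_pos)
  have R0: "R > 0" using Rpos0 R_def by simp
  have R2: "R\<^sup>2 = 1 - 2 * b * cos s + b\<^sup>2" using Rpos0 R_def by simp
  define x where "x = (cos s - b) / sin s"
  have "1 + x\<^sup>2 = (R / sin s)\<^sup>2"
    using ss R2 Rq unfolding x_def by (simp add: field_simps power2_eq_square)
  hence sq: "sqrt (1 + x\<^sup>2) = R / sin s" using R0 ss by simp
  have ccp: "cos cp = sin s / R" unfolding cp_def x_def[symmetric] cos_arctan sq by simp
  have scp: "sin cp = (cos s - b) / R"
    unfolding cp_def x_def[symmetric] sin_arctan sq using ss by (simp add: x_def)
  have sa: "sin (cp + s) = (1 - b * cos s) / R"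
    unfolding sin_add ccp scp using R0 sc by (simp add: field_simps power2_eq_square)
  have ca: "cos (cp + s) = b * sin s / R"
    unfolding cos_add ccp scp using R0 by (simp add: field_simps power2_eq_square)
  have T1: "tan cp + sec cp = (cos s - b + R) / sin s"
    unfolding tan_def sec_def ccp scp using R0 ss by (simp add: field_simps)
  have T2: "tan (cp + s) + sec (cp + s) = (1 - b * cos s + R) / (b * sin s)"
    unfolding tan_def sec_def sa ca using R0 ss b0 by (simp add: field_simps)
  have A1: "cos s - b + R > 0"
  proof -
    have "(cos s - b)\<^sup>2 < R\<^sup>2" using R2 Rq ss by simp
    hence "\<bar>cos s - b\<bar> < R" using R0 by (metis power2_abs power2_less_imp_less less_imp_le)
    thus ?thesis by linarith
  qed
  have A2: "1 - b * cos s + R > 0"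
  proof -
    have e: "R\<^sup>2 = (1 - b * cos s)\<^sup>2 + (b * sin s)\<^sup>2"
    proof -
      have h: "b\<^sup>2 = b\<^sup>2 * (sin s)\<^sup>2 + b\<^sup>2 * (cos s)\<^sup>2" using sc by (metis distrib_left mult_1_right)
      show ?thesis unfolding R2 power2_diff power_mult_distrib using h by simp
    qed
    have "(b * sin s)\<^sup>2 > 0" using b0 ss by simp
    hence "(1 - b * cos s)\<^sup>2 < R\<^sup>2" using e by linarith
    hence "\<bar>1 - b * cos s\<bar> < R" using R0 by (metis power2_abs power2_less_imp_less less_imp_le)
    thus ?thesis by linarith
  qed
  have A3: "R + 1 - b > 0"
  proof -
    have "b * cos s < b * 1" using cs1 b0 by (intro mult_strict_left_mono) auto
    hence "(1 - b)\<^sup>2 < R\<^sup>2" using R2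
      by (simp add: power2_eq_square algebra_simps)
    hence "\<bar>1 - b\<bar> < R" using R0 by (metis power2_abs power2_less_imp_less less_imp_le)
    thus ?thesis by linarith
  qed
  have vv: "v = (1 - b * cos s + R) / (b * (cos s - b + R))"
  proof -
    have n1: "cos s - b + R \<noteq> 0" "sin s \<noteq> 0" "b \<noteq> 0" using A1 ss b0 by auto
    show ?thesis unfolding v_def T1 T2 using n1 by (simp add: divide_divide_eq_left divide_divide_eq_right mult.commute)
  qed
  have vpos: "v > 0" unfolding vv using A1 A2 b0 by simp
  have "(v - 1) / (v + 1) = (1 - b * cos s + R - b * (cos s - b + R)) / (1 - b * cos s + R + b * (cos s - b + R))"
    unfolding vv
  proof (rule ratio_lemma)
    show "b * (cos s - b + R) \<noteq> 0" using A1 b0 by simp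
    show "1 - b * cos s + R + b * (cos s - b + R) \<noteq> 0" using A1 b0 A2
      by (smt (verit) mult_pos_pos)
  qed
  also have "1 - b * cos s + R - b * (cos s - b + R) = R * (R + 1 - b)"
    using R2 by (simp add: power2_eq_square algebra_simps)
  also have "1 - b * cos s + R + b * (cos s - b + R) = (1 + b) * (R + 1 - b)"
    using R2 by (simp add: power2_eq_square algebra_simps)
  finally have "(v - 1) / (v + 1) = R / (1 + b)" using A3 by simp
  hence "((v - 1) / (v + 1))\<^sup>2 = (1 - 2 * b * cos s + b\<^sup>2) / (1 + b)\<^sup>2"
    using R2 by (simp add: power_divide)
  also have "\<dots> = (cosh D - cos s) / (cosh D + 1)"
  proof -
    have e1: "cosh D - cos s = (1 - 2 * b * cos s + b\<^sup>2) / (2 * b)"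
      unfolding cosh_exp b_def[symmetric] using b0 by (simp add: field_simps power2_eq_square)
    have e2: "cosh D + 1 = (1 + b)\<^sup>2 / (2 * b)"
      unfolding cosh_exp b_def[symmetric] using b0 by (simp add: field_simps power2_eq_square)
    show ?thesis unfolding e1 e2 using b0 by simp
  qed
  finally show ?thesis using vpos by simp
qed

lemma neg_case:
  fixes s D :: real
  assumes s0: "0 < s" and sD: "s < \<bar>D\<bar>"
  defines "Cm \<equiv> (exp (2 * s) - exp (D + s)) / (exp (D + s) - 1)"
  defines "c \<equiv> sqrt (- Cm)"
  defines "v \<equiv> ((exp s / c + 1) * (- (1 / c) + 1)) / ((1 - exp s / c) * (1 + 1 / c))"
  shows "v > 0 \<and> ((v - 1) / (v + 1))\<^sup>2 = (cosh D - cosh s) / (cosh D + 1)"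
proof -
  define a where "a = exp s"
  define b where "b = exp D"
  have a1: "a > 1" unfolding a_def using s0 by simp
  have b0: "b > 0" unfolding b_def by simp
  have e2: "exp (2 * s) = a * a" unfolding a_def by (simp add: exp_add[symmetric])
  have eDs: "exp (D + s) = a * b" unfolding a_def b_def by (simp add: exp_add)
  define q where "q = a * (b - a) / (a * b - 1)"
  have Cmq: "Cm = - q" unfolding Cm_def q_def e2 eDs minus_divide_left by (simp add: algebra_simps)
  have qpos: "q > 0 \<and> a * b \<noteq> 1"
  proof (cases "D > 0")
    case True
    hence "s < D" using sD by simp
    hence "a < b" unfolding a_def b_def by simp
    moreover have "a * b > 1" unfolding eDs[symmetric] using True s0 by simp
    ultimately show ?thesis unfolding q_def using a1 by simp
  next
    case False
    hence "s < - D" "D < s" using sD s0 by auto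
    hence "b < a" "D + s < 0" unfolding a_def b_def by auto
    moreover have "a * b < 1" unfolding eDs[symmetric] using \<open>D + s < 0\<close> by simp
    ultimately show ?thesis unfolding q_def using a1
      by (simp add: divide_pos_neg mult_pos_neg zero_less_divide_iff)
  qed
  have ab1: "a * b - 1 \<noteq> 0" using qpos by simp
  have c0: "c > 0" unfolding c_def Cmq using qpos by simp
  have c2: "c\<^sup>2 = q" unfolding c_def Cmq using qpos by simp
  have vv: "v = ((a + c) * (c - 1)) / ((c - a) * (c + 1))"
  proof -
    have "exp s / c + 1 = (a + c) / c" "- (1 / c) + 1 = (c - 1) / c" "1 - exp s / c = (c - a) / c"
      "1 + 1 / c = (c + 1) / c" unfolding a_def using c0 by (auto simp: field_simps)
    thus ?thesis unfolding v_def using cancel_lemma[of c] c0 by simp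
  qed
  define k where "k = (1 - a\<^sup>2) / (a * b - 1)"
  have "a\<^sup>2 > 1" using a1 by (simp add: power2_eq_square) (metis less_1_mult)
  hence k0: "k \<noteq> 0" unfolding k_def using ab1 by simp
  have k1: "(c - 1) * (c + 1) = k"
  proof -
    have "(c - 1) * (c + 1) = c\<^sup>2 - 1" by (simp add: power2_eq_square algebra_simps)
    also have "\<dots> = k" unfolding c2 q_def k_def using ab1 by (simp add: field_simps power2_eq_square)
    finally show ?thesis .
  qed
  have k2: "(c - a) * (c + a) = a * b * k"
  proof -
    have "(c - a) * (c + a) = c\<^sup>2 - a\<^sup>2" by (simp add: power2_eq_square algebra_simps)
    also have "\<dots> = a * b * k" unfolding c2 q_def k_def using ab1 by (simp add: field_simps power2_eq_square)
    finally show ?thesis .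
  qed
  have "((c - 1) * (c - a)) * ((c + 1) * (c + a)) = a * b * k\<^sup>2"
  proof -
    have "((c - 1) * (c - a)) * ((c + 1) * (c + a)) = ((c - 1) * (c + 1)) * ((c - a) * (c + a))"
      by (simp only: ac_simps)
    also have "\<dots> = a * b * k\<^sup>2" unfolding k1 k2 by (simp add: power2_eq_square)
    finally show ?thesis .
  qed
  moreover have "a * b * k\<^sup>2 > 0" using a1 b0 k0 by simp
  moreover have "(c + 1) * (c + a) > 0" using c0 a1 by simp
  ultimately have sgn: "(c - 1) * (c - a) > 0" by (metis zero_less_mult_iff not_less_iff_gr_or_eq)
  have "c - a \<noteq> 0" using sgn by auto
  have vpos: "v > 0"
  proof -
    have "((a + c) * (c - 1)) * ((c - a) * (c + 1)) = ((a + c) * (c + 1)) * ((c - 1) * (c - a))"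
      by (simp only: ac_simps)
    moreover have "((a + c) * (c + 1)) > 0" using a1 c0 by simp
    ultimately have "((a + c) * (c - 1)) * ((c - a) * (c + 1)) > 0" using sgn by (metis mult_pos_pos)
    thus ?thesis unfolding vv by (simp only: zero_less_mult_iff zero_less_divide_iff)
  qed
  have qa: "q - a = - (a * (a - 1) * (b + 1)) / (a * b - 1)"
    unfolding q_def using ab1 by (simp add: field_simps)
  have qa0: "q - a \<noteq> 0" unfolding qa using a1 b0 ab1 by simp
  have "(v - 1) / (v + 1) = ((a + c) * (c - 1) - (c - a) * (c + 1)) / ((a + c) * (c - 1) + (c - a) * (c + 1))"
    unfolding vv
  proof (rule ratio_lemma)
    show "(c - a) * (c + 1) \<noteq> 0" using \<open>c - a \<noteq> 0\<close> c0 by simp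
    have "(a + c) * (c - 1) + (c - a) * (c + 1) = 2 * (c\<^sup>2 - a)"
      by (simp add: power2_eq_square algebra_simps)
    thus "(a + c) * (c - 1) + (c - a) * (c + 1) \<noteq> 0" using qa0 c2 by simp
  qed
  also have "\<dots> = (2 * (c * (a - 1))) / (2 * (q - a))"
    unfolding c2[symmetric] by (simp add: power2_eq_square algebra_simps)
  also have "\<dots> = c * (a - 1) / (q - a)" by (simp only: mult_divide_mult_cancel_left_if) simp
  finally have r: "(v - 1) / (v + 1) = c * (a - 1) / (q - a)" .
  have "((v - 1) / (v + 1))\<^sup>2 = q * (a - 1)\<^sup>2 / (q - a)\<^sup>2"
    unfolding r using c2 by (simp add: power_divide power_mult_distrib)
  also have "\<dots> = (b - a) * (a * b - 1) / (a * (b + 1)\<^sup>2)"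
  proof -
    have nz: "a \<noteq> 0" "a - 1 \<noteq> 0" "b + 1 \<noteq> 0" "a * b - 1 \<noteq> 0" using a1 b0 ab1 by auto
    define E where "E = a * b - 1"
    have E0: "E \<noteq> 0" using nz E_def by simp
    have "q * (a - 1)\<^sup>2 / (q - a)\<^sup>2 = (a * (b - a) / E) * (a - 1)\<^sup>2 / ((- (a * (a - 1) * (b + 1))) / E)\<^sup>2"
      by (simp only: qa) (simp only: q_def E_def)
    also have "\<dots> = (a * (b - a)) * (a - 1)\<^sup>2 * E / (a * (a - 1) * (b + 1))\<^sup>2"
      using E0 by (rule gen_lemma)
    also have "\<dots> = (a * (a - 1)\<^sup>2) * ((b - a) * E) / ((a * (a - 1)\<^sup>2) * (a * (b + 1)\<^sup>2))"
      by (simp add: power2_eq_square ac_simps)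
    also have "\<dots> = (b - a) * E / (a * (b + 1)\<^sup>2)"
      using nz by (subst mult_divide_mult_cancel_left) auto
    finally show ?thesis unfolding E_def .
  qed
  also have "\<dots> = (cosh D - cosh s) / (cosh D + 1)"
  proof -
    have e1: "cosh D - cosh s = (b - a) * (a * b - 1) / (2 * a * b)"
      unfolding cosh_exp[of D] cosh_exp[of s] b_def[symmetric] a_def[symmetric]
      using b0 a1 by (simp add: field_simps power2_eq_square)
    have e2: "cosh D + 1 = (1 + b)\<^sup>2 / (2 * b)"
      unfolding cosh_exp b_def[symmetric] using b0 by (simp add: field_simps power2_eq_square)
    have "(b - a) * (a * b - 1) / (2 * a * b) / ((1 + b)\<^sup>2 / (2 * b)) = (b - a) * (a * b - 1) / (a * (1 + b)\<^sup>2)"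
      using b0 a1 by (intro gen2) auto
    thus ?thesis unfolding e1 e2 by (simp add: add.commute)
  qed
  finally show ?thesis using vpos by simp
qed

lemma zero_case:
  fixes D :: real
  shows "(tanh (\<bar>D\<bar> / 2))\<^sup>2 = (cosh D - 1) / (cosh D + 1)"
proof -
  define b where "b = exp D"
  have b0: "b > 0" unfolding b_def by simp
  have "(tanh (\<bar>D\<bar> / 2))\<^sup>2 = (tanh (\<bar>ln b\<bar> / 2))\<^sup>2" unfolding b_def by simp
  also have "\<dots> = ((b - 1) / (b + 1))\<^sup>2" using b0 by (rule tanh_abs_ln)
  also have "\<dots> = (b - 1)\<^sup>2 / (b + 1)\<^sup>2" by (simp add: power_divide)
  also have "\<dots> = ((b - 1)\<^sup>2 / (2 * b)) / ((b + 1)\<^sup>2 / (2 * b))"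
    using b0 by simp
  also have "(b - 1)\<^sup>2 / (2 * b) = cosh D - 1"
    unfolding cosh_exp b_def[symmetric] using b0 by (simp add: field_simps power2_eq_square)
  also have "(b + 1)\<^sup>2 / (2 * b) = cosh D + 1"
    unfolding cosh_exp b_def[symmetric] using b0 by (simp add: field_simps power2_eq_square)
  finally show ?thesis .
qed

theorem lemma3p6:
  fixes d :: nat and Ds :: "nat \<Rightarrow> real" and D :: real
  assumes "d \<ge> 2"
    and "D = (\<Sum>i=1..d. Ds i)"
  shows "mono_on {- D\<^sup>2 / real d ..< pi\<^sup>2 / real d} (mfun d D)"
proof -
  define S where "S = {- D\<^sup>2 / real d ..< pi\<^sup>2 / real d}"
  have d0: "real d > 0" using assms(1) by simp
  define w where "w = (\<lambda>l::real. if l < 0 then cosh (sqrt (real d * - l)) else cos (sqrt (real d * l)))"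
  define h where "h = (\<lambda>l. (cosh D - w l) / (cosh D + 1))"
  have sqpi: "sqrt (real d * l) < pi" if "l < pi\<^sup>2 / real d" for l
  proof -
    have "real d * l < pi\<^sup>2" using that d0 by (simp add: field_simps)
    hence "sqrt (real d * l) < sqrt (pi\<^sup>2)" by (rule real_sqrt_less_mono)
    thus ?thesis by simp
  qed
  have key: "(tanh (mfun d D l / 2))\<^sup>2 = h l \<and> mfun d D l \<ge> 0" if lS: "l \<in> S" for l
  proof -
    from lS have l1: "- D\<^sup>2 / real d \<le> l" and l2: "l < pi\<^sup>2 / real d" unfolding S_def by auto
    consider (A) "l < 0 \<and> l = - D\<^sup>2 / real d" | (B) "- D\<^sup>2 / real d < l \<and> l < 0"
      | (C) "l = 0" | (P) "l > 0" using l1 by linarith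
    then show ?thesis
    proof cases
      case A
      hence m0: "mfun d D l = 0" unfolding mfun_def by simp
      have "real d * - l = D\<^sup>2" using A d0 by simp
      hence "w l = cosh D" unfolding w_def using A by simp
      thus ?thesis unfolding h_def m0 by simp
    next
      case B
      define s where "s = sqrt (real d * - l)"
      have s0: "0 < s" unfolding s_def using B d0 by (simp add: mult_pos_neg)
      have "real d * - l < D\<^sup>2" using B d0 by (simp add: field_simps)
      hence "s < sqrt (D\<^sup>2)" unfolding s_def by (rule real_sqrt_less_mono)
      hence sD: "s < \<bar>D\<bar>" by simp
      define Cm where "Cm = (exp (2 * s) - exp (D + s)) / (exp (D + s) - 1)"
      define c where "c = sqrt (- Cm)"
      define v where "v = ((exp s / c + 1) * (- (1 / c) + 1)) / ((1 - exp s / c) * (1 + 1 / c))"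
      have nc: "v > 0 \<and> ((v - 1) / (v + 1))\<^sup>2 = (cosh D - cosh s) / (cosh D + 1)"
        using neg_case[OF s0 sD] unfolding Cm_def c_def v_def by simp
      have "\<not> (l < 0 \<and> l = - D\<^sup>2 / real d)" using B by simp
      hence m: "mfun d D l = \<bar>ln v\<bar>"
        unfolding mfun_def v_def c_def Cm_def s_def Cminus_def Let_def using B by simp
      have "w l = cosh s" unfolding w_def s_def using B by simp
      thus ?thesis unfolding m h_def using tanh_abs_ln[of v] nc by simp
    next
      case C
      hence m: "mfun d D l = \<bar>D\<bar>" unfolding mfun_def by simp
      have "w l = 1" unfolding w_def C by simp
      thus ?thesis unfolding m h_def using zero_case by simp
    next
      case P
      define s where "s = sqrt (real d * l)"
      have s0: "0 < s" unfolding s_def using P d0 by simp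
      have spi: "s < pi" unfolding s_def using sqpi l2 by simp
      define cp where "cp = arctan ((cos s - exp D) / sin s)"
      define v where "v = (tan (cp + s) + sec (cp + s)) / (tan cp + sec cp)"
      have pc: "v > 0 \<and> ((v - 1) / (v + 1))\<^sup>2 = (cosh D - cos s) / (cosh D + 1)"
        using pos_case[OF s0 spi] unfolding cp_def v_def by simp
      have m: "mfun d D l = \<bar>ln v\<bar>"
        unfolding mfun_def v_def cp_def s_def Cplus_def Let_def using P by simp
      have "w l = cos s" unfolding w_def s_def using P by simp
      thus ?thesis unfolding m h_def using tanh_abs_ln[of v] pc by simp
    qed
  qed
  have wmono: "w l2 \<le> w l1" if "l1 \<in> S" "l2 \<in> S" "l1 \<le> l2" for l1 l2
  proof (cases "l2 < 0")
    case True
    hence "l1 < 0" using that by simp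
    have "sqrt (real d * - l2) \<le> sqrt (real d * - l1)"
      using that d0 by (simp add: mult_left_mono)
    hence "cosh (sqrt (real d * - l2)) \<le> cosh (sqrt (real d * - l1))"
      using True \<open>l1 < 0\<close> d0 by (subst cosh_real_nonneg_le_iff) (auto simp: mult_pos_neg less_imp_le)
    thus ?thesis unfolding w_def using True \<open>l1 < 0\<close> by simp
  next
    case False
    show ?thesis
    proof (cases "l1 < 0")
      case True
      have "cosh (sqrt (real d * - l1)) \<ge> 1" by (rule cosh_real_ge_1)
      thus ?thesis unfolding w_def using True False by (simp add: order_trans[OF cos_le_one cosh_real_ge_1])
    next
      case F1: False
      have a: "sqrt (real d * l1) \<le> sqrt (real d * l2)"
        using that d0 by (simp add: mult_left_mono)
      have b: "sqrt (real d * l2) \<le> pi" using sqpi[of l2] that(2) unfolding S_def by simp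
      have "cos (sqrt (real d * l2)) \<le> cos (sqrt (real d * l1))"
        using a b F1 False d0 by (subst cos_mono_le_eq) (auto intro: order_trans[OF a b])
      thus ?thesis unfolding w_def using F1 False by simp
    qed
  qed
  have hmono: "h l1 \<le> h l2" if "l1 \<in> S" "l2 \<in> S" "l1 \<le> l2" for l1 l2
  proof -
    have "cosh D + 1 > 0" by (smt (verit) cosh_real_ge_1)
    thus ?thesis unfolding h_def using wmono[OF that] by (simp add: divide_right_mono)
  qed
  show ?thesis unfolding S_def[symmetric]
  proof (rule mono_onI)
    fix r t assume r: "r \<in> S" and t: "t \<in> S" and rt: "r \<le> t"
    have k1: "(tanh (mfun d D r / 2))\<^sup>2 \<le> (tanh (mfun d D t / 2))\<^sup>2"
      using key[OF r] key[OF t] hmono[OF r t rt] by simp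
    have "tanh (mfun d D t / 2) \<ge> 0" using key[OF t] by simp
    hence "tanh (mfun d D r / 2) \<le> tanh (mfun d D t / 2)"
      using k1 by (rule power2_le_imp_le[rotated])
    thus "mfun d D r \<le> mfun d D t" by simp
  qed
qed

end
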